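(* Let $M$ be a Hausdorff topological abelian group. Let $f\colon[0,\infty)^n\to M$ be a function that in each variable (with the other variables fixed) is a continuous semigroup homomorphism $([0,\infty),+)\to M$. Then for any $i\neq j$ and any $a,\lambda_1,\ldots,\lambda_n\in[0,\infty)$, \[f(\lambda_1,\ldots,a\lambda_i,\ldots,\lambda_n)=f(\lambda_1,\ldots,a\lambda_j,\ldots,\lambda_n),\] where on the left $\lambda_i$ is replaced by $a\lambda_i$ and on the right $\lambda_j$ is replaced by $a\lambda_j$. Consequently $f(\lambda_1,\ldots,\lambda_n)=g(\lambda_1\cdots\lambda_n)$, where $g\colon[0,\infty)\to M$ is the homomorphism $g(\lambda)=f(\lambda,1,\ldots,1)$. *)

theory Defs
  imports "HOL-Analysis.Analysis"
begin

definition nonneg_orthant :: "nat \<Rightarrow> real list set" where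
  "nonneg_orthant n = {xs. length xs = n \<and> (\<forall>x\<in>set xs. 0 \<le> x)}"

end

theory Submission
  imports Defs
begin

lemma add_nat_mult:
  fixes g :: "real \<Rightarrow> 'm::ab_group_add"
  assumes add: "\<And>s1 s2. s1 \<ge> 0 \<Longrightarrow> s2 \<ge> 0 \<Longrightarrow> g (s1 + s2) = g s1 + g s2"
    and x: "x \<ge> 0"
  shows "g (real k * x) = (\<Sum>_<k. g x)"
proof (induction k)
  case 0
  have "g 0 = g 0 + g 0" using add[of 0 0] by simp
  then show ?case by simp
next
  case (Suc k)
  have "g (real (Suc k) * x) = g (real k * x + x)" by (simp add: algebra_simps)
  also have "\<dots> = g (real k * x) + g x" using add x by simp
  finally show ?case using Suc by simp
qed

lemma biadd_comm:
  fixes F :: "real \<Rightarrow> real \<Rightarrow> 'm::{topological_group_add, ab_group_add, t2_space}"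
  assumes add1: "\<And>s1 s2 t. s1 \<ge> 0 \<Longrightarrow> s2 \<ge> 0 \<Longrightarrow> t \<ge> 0 \<Longrightarrow> F (s1 + s2) t = F s1 t + F s2 t"
    and add2: "\<And>s t1 t2. s \<ge> 0 \<Longrightarrow> t1 \<ge> 0 \<Longrightarrow> t2 \<ge> 0 \<Longrightarrow> F s (t1 + t2) = F s t1 + F s t2"
    and c1: "\<And>t. t \<ge> 0 \<Longrightarrow> continuous_on {0..} (\<lambda>s. F s t)"
    and c2: "\<And>s. s \<ge> 0 \<Longrightarrow> continuous_on {0..} (\<lambda>t. F s t)"
    and s: "s \<ge> 0" and t: "t \<ge> 0" and a: "a \<ge> 0"
  shows "F (a * s) t = F s (a * t)"
proof -
  have rat: "F (real p / real q * s) t = F s (real p / real q * t)" if q: "q > 0" for p q :: nat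
  proof -
    have tq: "t / real q \<ge> 0" using t by simp
    have ps: "real p / real q * s \<ge> 0" using s by simp
    have "F (real p / real q * s) t = F (real p / real q * s) (real q * (t / real q))"
      using q by simp
    also have "\<dots> = (\<Sum>_<q. F (real p / real q * s) (t / real q))"
      by (rule add_nat_mult[OF add2[OF ps] tq])
    also have "\<dots> = F (real q * (real p / real q * s)) (t / real q)"
      by (rule add_nat_mult[OF add1[OF _ _ tq] ps, symmetric])
    also have "\<dots> = F (real p * s) (t / real q)" using q by simp
    also have "\<dots> = (\<Sum>_<p. F s (t / real q))"
      by (rule add_nat_mult[OF add1[OF _ _ tq] s])
    also have "\<dots> = F s (real p * (t / real q))"
      by (rule add_nat_mult[OF add2[OF s] tq, symmetric])
    finally show ?thesis by simp
  qed
  define G where "G = (\<lambda>a. F (max a 0 * s) t)"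
  define H where "H = (\<lambda>a. F s (max a 0 * t))"
  have "continuous_on UNIV G" unfolding G_def
    by (rule continuous_on_compose2[OF c1[OF t]]) (auto intro!: continuous_intros simp: s)
  moreover have "continuous_on UNIV H" unfolding H_def
    by (rule continuous_on_compose2[OF c2[OF s]]) (auto intro!: continuous_intros simp: t)
  ultimately have cl: "closed {x. G x = H x}" by (rule closed_Collect_eq)
  have "\<rat> \<subseteq> {x. G x = H x}"
  proof
    fix x :: real assume "x \<in> \<rat>"
    then obtain u v where v: "v > 0" and x: "x = of_int u / of_int v" by (rule Rats_cases') blast
    show "x \<in> {x. G x = H x}"
    proof (cases "x \<ge> 0")
      case False then show ?thesis using rat[of 1 0] by (simp add: G_def H_def)
    next
      case True
      then have "u \<ge> 0" using v x by (simp add: divide_nonneg_pos zero_le_divide_iff)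
      then have "x = real (nat u) / real (nat v)" using x v by simp
      moreover have "nat v > 0" using v by simp
      ultimately show ?thesis using rat[of "nat v" "nat u"] True by (simp add: G_def H_def)
    qed
  qed
  then have "closure \<rat> \<subseteq> {x. G x = H x}" using cl by (rule closure_minimal)
  then have "G a = H a" using Rats_closure_real by auto
  then show ?thesis using a by (simp add: G_def H_def)
qed


lemma orth_upd: "xs \<in> nonneg_orthant n \<Longrightarrow> t \<ge> 0 \<Longrightarrow> xs[k := t] \<in> nonneg_orthant n"
  unfolding nonneg_orthant_def using set_update_subset_insert by fastforce

lemma orth_nth: "xs \<in> nonneg_orthant n \<Longrightarrow> k < n \<Longrightarrow> xs ! k \<ge> 0"
  unfolding nonneg_orthant_def by auto

theorem proposition3p7:
  fixes f :: "real list \<Rightarrow> 'm::{topological_group_add, ab_group_add, t2_space}"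
    and n :: nat
  assumes cont: "\<And>xs i. xs \<in> nonneg_orthant n \<Longrightarrow> i < n \<Longrightarrow>
              continuous_on {0..} (\<lambda>t. f (xs[i := t]))"
    and hom: "\<And>xs i s t. xs \<in> nonneg_orthant n \<Longrightarrow> i < n \<Longrightarrow> 0 \<le> s \<Longrightarrow> 0 \<le> t \<Longrightarrow>
              f (xs[i := s + t]) = f (xs[i := s]) + f (xs[i := t])"
  shows "(\<forall>xs\<in>nonneg_orthant n. \<forall>i<n. \<forall>j<n. \<forall>a\<ge>0. i \<noteq> j \<longrightarrow>
           f (xs[i := a * xs ! i]) = f (xs[j := a * xs ! j])) \<and>
         (n \<ge> 1 \<longrightarrow> (\<forall>xs\<in>nonneg_orthant n.
           f xs = f (prod_list xs # replicate (n - 1) 1)))"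
proof -
  have P1: "f (xs[i := a * xs ! i]) = f (xs[j := a * xs ! j])"
    if xs: "xs \<in> nonneg_orthant n" and i: "i < n" and j: "j < n" and a: "a \<ge> 0" and ij: "i \<noteq> j"
    for xs i j a
  proof -
    define F where "F = (\<lambda>s t. f (xs[i := s, j := t]))"
    have sw: "xs[i := s, j := t] = xs[j := t, i := s]" for s t
      using ij by (simp add: list_update_swap)
    have "F (a * (xs ! i)) (xs ! j) = F (xs ! i) (a * (xs ! j))"
    proof (rule biadd_comm)
      show "F (s1 + s2) t = F s1 t + F s2 t" if "s1 \<ge> 0" "s2 \<ge> 0" "t \<ge> 0" for s1 s2 t
        unfolding F_def sw using hom[OF orth_upd[OF xs \<open>t \<ge> 0\<close>] i] that by simp
      show "F s (t1 + t2) = F s t1 + F s t2" if "s \<ge> 0" "t1 \<ge> 0" "t2 \<ge> 0" for s t1 t2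
        unfolding F_def using hom[OF orth_upd[OF xs \<open>s \<ge> 0\<close>] j] that by simp
      show "continuous_on {0..} (\<lambda>s. F s t)" if "t \<ge> 0" for t
        unfolding F_def sw using cont[OF orth_upd[OF xs that] i] by simp
      show "continuous_on {0..} (\<lambda>t. F s t)" if "s \<ge> 0" for s
        unfolding F_def using cont[OF orth_upd[OF xs that] j] by simp
    qed (use orth_nth[OF xs i] orth_nth[OF xs j] a in auto)
    then show ?thesis unfolding F_def using sw by simp
  qed
  moreover have "f xs = f (prod_list xs # replicate (n - 1) 1)"
    if n: "n \<ge> 1" and xs: "xs \<in> nonneg_orthant n" for xs
  proof -
    have len: "length xs = n" using xs by (simp add: nonneg_orthant_def)
    have "m \<le> n - 1 \<Longrightarrow> f xs = f (prod_list (take (m+1) xs) # replicate m 1 @ drop (m+1) xs)" for m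
    proof (induction m)
      case 0
      then show ?case using n len by (cases xs) auto
    next
      case (Suc m)
      define c where "c = xs ! (m+1)"
      define p where "p = prod_list (take (m+1) xs)"
      define zs where "zs = p # replicate (m+1) 1 @ drop (m+2) xs"
      have ml: "m + 1 < n" using Suc.prems n by simp
      have pnn: "p \<ge> 0" unfolding p_def using xs
        by (auto simp: nonneg_orthant_def intro!: prod_list_nonneg dest: in_set_takeD)
      have dr: "drop (m+1) xs = c # drop (m+2) xs" unfolding c_def using ml len
        by (simp add: Cons_nth_drop_Suc)
      have zsn: "zs \<in> nonneg_orthant n" unfolding zs_def nonneg_orthant_def using xs pnn len ml
        by (auto simp: nonneg_orthant_def dest: in_set_dropD)
      have zk: "zs ! (m+1) = 1" unfolding zs_def by (simp add: nth_append del: replicate.simps)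
      have z0: "zs ! 0 = p" unfolding zs_def by simp
      have c0: "c \<ge> 0" unfolding c_def using orth_nth[OF xs ml] .
      have "zs[m+1 := c * zs ! (m+1)] = p # replicate m 1 @ drop (m+1) xs"
        unfolding zk zs_def dr by (simp add: list_update_append nth_append replicate_append_same[symmetric])
      moreover have "zs[0 := c * zs ! 0] = prod_list (take (Suc m + 1) xs) # replicate (Suc m) 1 @ drop (Suc m + 1) xs"
        unfolding z0 zs_def p_def c_def using ml len
        by (simp add: take_Suc_conv_app_nth mult.commute)
      moreover have "f (zs[m+1 := c * zs ! (m+1)]) = f (zs[0 := c * zs ! 0])"
        using P1[OF zsn ml _ c0] n by simp
      ultimately show ?case using Suc p_def by simp
    qed
    from this[of "n-1"] show ?thesis using n len by simp
  qed
  ultimately show ?thesis by blast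
qed

end
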